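(* If $T$ is a tree of order $n\ge 2$, then $\gamma_{\rm gr}^t(T) = n$ if and only if $T$ has a perfect matching.
   Context: $N(v)$ denotes the open neighborhood of $v$. A sequence $S=(v_1,\ldots,v_k)$ of distinct vertices of a graph $G$ without isolated vertices is a legal sequence if $N(v_i)\setminus \bigcup_{j=1}^{i-1} N(v_j)\neq\emptyset$ for every $i\in\{2,\ldots,k\}$, and a total dominating sequence if moreover $\{v_1,\ldots,v_k\}$ is a total dominating set of $G$ (every vertex has a neighbor in it). $\gamma_{\rm gr}^t(G)$ is the maximum length of a total dominating sequence of $G$. *)

theory Defs
  imports Main
begin

definition simple_graph :: "'a set \<Rightarrow> ('a \<Rightarrow> 'a \<Rightarrow> bool) \<Rightarrow> bool" where
  "simple_graph V E \<longleftrightarrow> finite V \<and> (\<forall>u v. E u v \<longrightarrow> u \<in> V \<and> v \<in> V)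
     \<and> (\<forall>u v. E u v \<longrightarrow> E v u) \<and> (\<forall>v. \<not> E v v)"

definition nbhd :: "'a set \<Rightarrow> ('a \<Rightarrow> 'a \<Rightarrow> bool) \<Rightarrow> 'a \<Rightarrow> 'a set" where
  "nbhd V E v = {u \<in> V. E v u}"

definition connected_graph :: "'a set \<Rightarrow> ('a \<Rightarrow> 'a \<Rightarrow> bool) \<Rightarrow> bool" where
  "connected_graph V E \<longleftrightarrow> (\<forall>u\<in>V. \<forall>v\<in>V. (\<lambda>x y. E x y)\<^sup>*\<^sup>* u v)"

definition is_cycle :: "'a set \<Rightarrow> ('a \<Rightarrow> 'a \<Rightarrow> bool) \<Rightarrow> 'a list \<Rightarrow> bool" where
  "is_cycle V E cs \<longleftrightarrow> length cs \<ge> 3 \<and> distinct cs \<and> set cs \<subseteq> V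
     \<and> (\<forall>i. Suc i < length cs \<longrightarrow> E (cs ! i) (cs ! Suc i))
     \<and> E (last cs) (hd cs)"

definition acyclic_graph :: "'a set \<Rightarrow> ('a \<Rightarrow> 'a \<Rightarrow> bool) \<Rightarrow> bool" where
  "acyclic_graph V E \<longleftrightarrow> (\<nexists>cs. is_cycle V E cs)"

definition is_tree :: "'a set \<Rightarrow> ('a \<Rightarrow> 'a \<Rightarrow> bool) \<Rightarrow> bool" where
  "is_tree V E \<longleftrightarrow> simple_graph V E \<and> V \<noteq> {} \<and> connected_graph V E \<and> acyclic_graph V E"

definition perfect_matching :: "'a set \<Rightarrow> ('a \<Rightarrow> 'a \<Rightarrow> bool) \<Rightarrow> 'a set set \<Rightarrow> bool" where
  "perfect_matching V E M \<longleftrightarrow>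
     (\<forall>e\<in>M. \<exists>u v. e = {u, v} \<and> E u v)
     \<and> (\<forall>e1\<in>M. \<forall>e2\<in>M. e1 \<noteq> e2 \<longrightarrow> e1 \<inter> e2 = {})
     \<and> (\<forall>v\<in>V. \<exists>e\<in>M. v \<in> e)"

definition has_perfect_matching :: "'a set \<Rightarrow> ('a \<Rightarrow> 'a \<Rightarrow> bool) \<Rightarrow> bool" where
  "has_perfect_matching V E \<longleftrightarrow> (\<exists>M. perfect_matching V E M)"

definition legal_seq :: "'a set \<Rightarrow> ('a \<Rightarrow> 'a \<Rightarrow> bool) \<Rightarrow> 'a list \<Rightarrow> bool" where
  "legal_seq V E S \<longleftrightarrow> distinct S \<and> set S \<subseteq> V
     \<and> (\<forall>i. 1 \<le> i \<and> i < length S \<longrightarrow>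
           nbhd V E (S ! i) - (\<Union>j<i. nbhd V E (S ! j)) \<noteq> {})"

definition total_dominating_set :: "'a set \<Rightarrow> ('a \<Rightarrow> 'a \<Rightarrow> bool) \<Rightarrow> 'a set \<Rightarrow> bool" where
  "total_dominating_set V E D \<longleftrightarrow> D \<subseteq> V \<and> (\<forall>v\<in>V. \<exists>u\<in>D. E v u)"

definition total_dominating_seq :: "'a set \<Rightarrow> ('a \<Rightarrow> 'a \<Rightarrow> bool) \<Rightarrow> 'a list \<Rightarrow> bool" where
  "total_dominating_seq V E S \<longleftrightarrow> legal_seq V E S \<and> total_dominating_set V E (set S)"

definition gamma_gr_t :: "'a set \<Rightarrow> ('a \<Rightarrow> 'a \<Rightarrow> bool) \<Rightarrow> nat" where
  "gamma_gr_t V E = Max {length S | S. total_dominating_seq V E S}"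

end

theory Submission imports Defs begin

fun lg :: "'a set \<Rightarrow> ('a \<Rightarrow> 'a \<Rightarrow> bool) \<Rightarrow> 'a set \<Rightarrow> 'a list \<Rightarrow> bool" where
  "lg V E D [] = True"
| "lg V E D (x#xs) = (nbhd V E x - D \<noteq> {} \<and> lg V E (D \<union> nbhd V E x) xs)"

lemma UN_less_Suc_shift: "(\<Union>j<Suc k. A j) = A 0 \<union> (\<Union>j<k. A (Suc j))"
  by (auto simp: lessThan_Suc_eq_insert_0)

lemma lg_nth: "lg V E D S \<longleftrightarrow> (\<forall>i<length S. nbhd V E (S!i) - (D \<union> (\<Union>j<i. nbhd V E (S!j))) \<noteq> {})"
proof (induction S arbitrary: D)
  case Nil
  then show ?case by simp
next
  case (Cons x xs)
  show ?case
    by (simp add: Cons.IH All_less_Suc2 UN_less_Suc_shift Un_assoc)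
qed

lemma legal_cons: "legal_seq V E (x#xs) \<longleftrightarrow> distinct (x#xs) \<and> set (x#xs) \<subseteq> V \<and> lg V E (nbhd V E x) xs"
proof -
  have "(\<forall>i. 1 \<le> i \<and> i < length (x#xs) \<longrightarrow>
           nbhd V E ((x#xs) ! i) - (\<Union>j<i. nbhd V E ((x#xs) ! j)) \<noteq> {})
    \<longleftrightarrow> (\<forall>k<length xs. nbhd V E (xs ! k) - (\<Union>j<Suc k. nbhd V E ((x#xs) ! j)) \<noteq> {})"
  proof
    assume H: "\<forall>i. 1 \<le> i \<and> i < length (x#xs) \<longrightarrow>
           nbhd V E ((x#xs) ! i) - (\<Union>j<i. nbhd V E ((x#xs) ! j)) \<noteq> {}"
    show "\<forall>k<length xs. nbhd V E (xs ! k) - (\<Union>j<Suc k. nbhd V E ((x#xs) ! j)) \<noteq> {}"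
    proof (intro allI impI)
      fix k assume "k < length xs"
      then show "nbhd V E (xs ! k) - (\<Union>j<Suc k. nbhd V E ((x#xs) ! j)) \<noteq> {}"
        using H[rule_format, of "Suc k"] by simp
    qed
  next
    assume H: "\<forall>k<length xs. nbhd V E (xs ! k) - (\<Union>j<Suc k. nbhd V E ((x#xs) ! j)) \<noteq> {}"
    show "\<forall>i. 1 \<le> i \<and> i < length (x#xs) \<longrightarrow>
           nbhd V E ((x#xs) ! i) - (\<Union>j<i. nbhd V E ((x#xs) ! j)) \<noteq> {}"
    proof (intro allI impI)
      fix i assume i: "1 \<le> i \<and> i < length (x#xs)"
      then obtain k where k: "i = Suc k" by (cases i) auto
      show "nbhd V E ((x#xs) ! i) - (\<Union>j<i. nbhd V E ((x#xs) ! j)) \<noteq> {}"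
        using H[rule_format, of k] i k by simp
    qed
  qed
  also have "\<dots> \<longleftrightarrow> lg V E (nbhd V E x) xs"
    by (simp add: lg_nth UN_less_Suc_shift)
  finally show ?thesis unfolding legal_seq_def by blast
qed

lemma lg_append: "lg V E D (xs @ ys) \<longleftrightarrow> lg V E D xs \<and> lg V E (D \<union> \<Union>(nbhd V E ` set xs)) ys"
  by (induction xs arbitrary: D) (auto simp: Un_assoc)

lemma lg_mono: "lg V E D S \<Longrightarrow> V \<subseteq> V' \<Longrightarrow> D' \<inter> V \<subseteq> D \<Longrightarrow> lg V' E D' S"
proof (induction S arbitrary: D D')
  case Nil then show ?case by simp
next
  case (Cons x xs)
  from Cons.prems(1) obtain u where u: "u \<in> nbhd V E x" "u \<notin> D" by auto
  have "u \<in> nbhd V' E x - D'" using u Cons.prems(2,3) by (auto simp: nbhd_def)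
  moreover have "lg V' E (D' \<union> nbhd V' E x) xs"
    apply (rule Cons.IH[of "D \<union> nbhd V E x"])
    using Cons.prems by (auto simp: nbhd_def)
  ultimately show ?case by auto
qed

definition gpath :: "'a set \<Rightarrow> ('a \<Rightarrow> 'a \<Rightarrow> bool) \<Rightarrow> 'a list \<Rightarrow> bool" where
  "gpath W E P \<longleftrightarrow> P \<noteq> [] \<and> distinct P \<and> set P \<subseteq> W \<and> (\<forall>i. Suc i < length P \<longrightarrow> E (P!i) (P!Suc i))"

lemma path_cycle:
  assumes sym: "\<forall>u v. E u v \<longrightarrow> E v u" and p: "gpath W E P" and "W \<subseteq> V"
    and c: "2 \<le> c" "c < length P" and e: "E (P!0) (P!c)"
  shows "is_cycle V E (take (Suc c) P)"
proof -
  have "length (take (Suc c) P) = Suc c" using c by simp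
  moreover have "last (take (Suc c) P) = P!c" using c
    by (subst last_conv_nth) (auto simp: min_def intro: arg_cong[where f="nth P"])
  moreover have "hd (take (Suc c) P) = P!0" using c p by (simp add: gpath_def hd_conv_nth)
  moreover have "set (take (Suc c) P) \<subseteq> V" using p assms(3) set_take_subset[of "Suc c" P]
    by (auto simp: gpath_def)
  moreover have "distinct (take (Suc c) P)" using p by (simp add: gpath_def)
  moreover have "\<forall>i. Suc i < length (take (Suc c) P) \<longrightarrow> E (take (Suc c) P ! i) (take (Suc c) P ! Suc i)"
    using p c by (auto simp: gpath_def)
  moreover have "E (P!c) (P!0)" using e sym by blast
  ultimately show ?thesis unfolding is_cycle_def using c by simp
qed

lemma leaf_exists:
  assumes sym: "\<forall>u v. E u v \<longrightarrow> E v u" and irr: "\<forall>v. \<not> E v v" and acyc: "\<nexists>cs. is_cycle V E cs"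
    and fin: "finite W" and sub: "W \<subseteq> V" and ne: "W \<noteq> {}"
  shows "\<exists>l\<in>W. \<forall>y\<in>W. \<forall>z\<in>W. E l y \<longrightarrow> E l z \<longrightarrow> y = z"
proof -
  obtain x where x: "x \<in> W" using ne by auto
  have px: "gpath W E [x]" using x by (simp add: gpath_def)
  have bnd: "\<forall>P. gpath W E P \<longrightarrow> length P < Suc (card W)"
    using fin by (auto simp: gpath_def intro!: le_imp_less_Suc dest!: distinct_card card_mono[OF fin])
  obtain P where P: "gpath W E P" and Pmax: "\<And>Q. gpath W E Q \<Longrightarrow> length Q \<le> length P"
    using ex_has_greatest_nat[of "gpath W E" "[x]" length "Suc (card W)", OF px bnd] by blast
  have Pne: "P \<noteq> []" using P by (simp add: gpath_def)
  have inP: "y \<in> set P" if "y \<in> W" "E (P!0) y" for y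
  proof (rule ccontr)
    assume ny: "y \<notin> set P"
    have "gpath W E (y # P)"
      using P ny that sym[rule_format, of "P!0" y] Pne unfolding gpath_def
      by (auto simp: nth_Cons split: nat.splits)
    from Pmax[OF this] show False by simp
  qed
  show ?thesis
  proof (intro bexI ballI impI)
    show "P!0 \<in> W" using P Pne by (auto simp: gpath_def)
    fix y z assume y: "y \<in> W" and z: "z \<in> W" and ey: "E (P!0) y" and ez: "E (P!0) z"
    show "y = z"
    proof (rule ccontr)
      assume yz: "y \<noteq> z"
      obtain a where a: "a < length P" "P!a = y" using inP[OF y ey] by (auto simp: in_set_conv_nth)
      obtain b where b: "b < length P" "P!b = z" using inP[OF z ez] by (auto simp: in_set_conv_nth)
      have "a \<noteq> 0" using a ey irr by (metis)
      moreover have "b \<noteq> 0" using b ez irr by (metis)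
      moreover have "a \<noteq> b" using a b yz by auto
      ultimately have "(2 \<le> a) \<or> (2 \<le> b)" by linarith
      then show False
      proof
        assume "2 \<le> a"
        from path_cycle[OF sym P sub this a(1)] ey a acyc show False by auto
      next
        assume "2 \<le> b"
        from path_cycle[OF sym P sub this b(1)] ez b acyc show False by auto
      qed
    qed
  qed
qed

lemma forest_seq:
  assumes sym: "\<forall>u v. E u v \<longrightarrow> E v u" and irr: "\<forall>v. \<not> E v v" and acyc: "\<nexists>cs. is_cycle V E cs"
  shows "finite W \<Longrightarrow> W \<subseteq> V \<Longrightarrow> \<forall>x\<in>W. m x \<in> W \<and> E x (m x) \<and> m (m x) = x
    \<Longrightarrow> \<exists>S. distinct S \<and> set S = W \<and> legal_seq W E S"
proof (induction "card W" arbitrary: W rule: less_induct)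
  case less
  show ?case
  proof (cases "W = {}")
    case True
    then show ?thesis by (auto simp: legal_seq_def)
  next
    case False
    obtain l where l: "l \<in> W" and lleaf: "\<forall>y\<in>W. \<forall>z\<in>W. E l y \<longrightarrow> E l z \<longrightarrow> y = z"
      using leaf_exists[OF sym irr acyc less.prems(1,2) False] by blast
    define w where "w = m l"
    have w: "w \<in> W" "E l w" "m w = l" using less.prems(3) l by (auto simp: w_def)
    have lw: "l \<noteq> w" using w irr by auto
    have lnb: "\<And>y. y \<in> W \<Longrightarrow> E l y \<Longrightarrow> y = w" using lleaf w by blast
    define W' where "W' = W - {l, w}"
    have "W' \<subset> W" unfolding W'_def using l by blast
    then have cardlt: "card W' < card W" using less.prems(1) by (rule psubset_card_mono[rotated])
    have clos: "\<forall>x\<in>W'. m x \<in> W' \<and> E x (m x) \<and> m (m x) = x"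
    proof
      fix x assume x: "x \<in> W'"
      then have xW: "x \<in> W" "x \<noteq> l" "x \<noteq> w" unfolding W'_def by auto
      have p: "m x \<in> W" "E x (m x)" "m (m x) = x" using less.prems(3) xW(1) by auto
      have "m x \<noteq> l"
      proof
        assume "m x = l" then have "m l = x" using p(3) by simp
        then show False using xW(3) by (simp add: w_def)
      qed
      moreover have "m x \<noteq> w"
      proof
        assume "m x = w" then have "m w = x" using p(3) by simp
        then show False using xW(2) w(3) by simp
      qed
      ultimately show "m x \<in> W' \<and> E x (m x) \<and> m (m x) = x" using p unfolding W'_def by simp
    qed
    have "finite W'" "W' \<subseteq> V" using less.prems(1,2) unfolding W'_def by auto
    from less.hyps[OF cardlt this clos]
    obtain S' where S': "distinct S'" "set S' = W'" "legal_seq W' E S'" by blast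
    have nbl: "nbhd W E l = {w}"
    proof
      show "nbhd W E l \<subseteq> {w}"
      proof
        fix y assume "y \<in> nbhd W E l"
        then have "y \<in> W" "E l y" unfolding nbhd_def by auto
        then show "y \<in> {w}" using lnb by blast
      qed
      show "{w} \<subseteq> nbhd W E l" using w unfolding nbhd_def by auto
    qed
    have part1: "lg W E {w} S'"
    proof (cases S')
      case Nil then show ?thesis by simp
    next
      case (Cons s T)
      have sW': "s \<in> W'" using S' Cons by auto
      have lgT: "lg W' E (nbhd W' E s) T" using S'(3) Cons by (simp add: legal_cons)
      have "m s \<in> nbhd W E s - {w}" using clos sW' unfolding nbhd_def W'_def by auto
      moreover have "lg W E ({w} \<union> nbhd W E s) T"
        apply (rule lg_mono[OF lgT])
        unfolding W'_def nbhd_def by auto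
      ultimately show ?thesis using Cons by auto
    qed
    have part2: "lg W E ({w} \<union> \<Union>(nbhd W E ` set S')) [w]"
    proof -
      have "E w l" using w(2) sym by blast
      then have "l \<in> nbhd W E w" using l unfolding nbhd_def by simp
      moreover have "l \<notin> \<Union>(nbhd W E ` set S')"
      proof
        assume "l \<in> \<Union>(nbhd W E ` set S')"
        then obtain s where "s \<in> W'" "E s l" using S'(2) unfolding nbhd_def by auto
        then have "E l s" "s \<in> W" "s \<noteq> w" using sym unfolding W'_def by auto
        then show False using lnb by blast
      qed
      ultimately show ?thesis using lw by auto
    qed
    have lS: "l \<notin> set S'" and wS: "w \<notin> set S'" using S'(2) unfolding W'_def by auto
    have dd: "distinct (l # S' @ [w])" using lS wS lw S'(1) by simp
    have ss: "set (l # S' @ [w]) = W" using S'(2) l w(1) unfolding W'_def by auto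
    have "lg W E (nbhd W E l) (S' @ [w])" unfolding nbl lg_append using part1 part2 by simp
    then have "legal_seq W E (l # S' @ [w])" using dd ss unfolding legal_cons by simp
    moreover note dd ss
    ultimately show ?thesis by blast
  qed
qed

lemma footprint:
  "lg V E D S \<Longrightarrow> distinct S \<Longrightarrow> \<exists>f. (\<forall>v\<in>set S. f v \<in> nbhd V E v \<and> f v \<notin> D) \<and> inj_on f (set S)"
proof (induction S arbitrary: D)
  case Nil then show ?case by auto
next
  case (Cons x xs)
  from Cons.prems obtain u where u: "u \<in> nbhd V E x" "u \<notin> D" by auto
  from Cons.prems Cons.IH[of "D \<union> nbhd V E x"] obtain g where
    g: "\<forall>v\<in>set xs. g v \<in> nbhd V E v \<and> g v \<notin> D \<union> nbhd V E x" "inj_on g (set xs)" by auto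
  have xn: "x \<notin> set xs" using Cons.prems by auto
  define f where "f = g(x := u)"
  have "\<forall>v\<in>set (x#xs). f v \<in> nbhd V E v \<and> f v \<notin> D" using g u xn by (auto simp: f_def)
  moreover have "inj_on f (set (x#xs))"
  proof -
    have "inj_on f (set xs)" using g xn unfolding f_def by (metis fun_upd_other inj_on_cong)
    moreover have "f x \<notin> f ` set xs" using g u xn unfolding f_def by auto
    ultimately show ?thesis using xn by simp
  qed
  ultimately show ?case by blast
qed

lemma greedy:
  assumes sym: "\<forall>u v. E u v \<longrightarrow> E v u" and fin: "finite V" and nb: "\<forall>v\<in>V. \<exists>u\<in>V. E v u"
  shows "legal_seq V E S \<Longrightarrow> \<exists>S'. total_dominating_seq V E S'"
proof (induction "card V - length S" arbitrary: S rule: less_induct)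
  case less
  show ?case
  proof (cases "total_dominating_set V E (set S)")
    case True then show ?thesis using less.prems by (auto simp: total_dominating_seq_def)
  next
    case False
    have Ssub: "set S \<subseteq> V" "distinct S" using less.prems by (auto simp: legal_seq_def)
    then obtain w where w: "w \<in> V" "\<forall>y\<in>set S. \<not> E w y" using False by (auto simp: total_dominating_set_def)
    obtain u where u: "u \<in> V" "E w u" using nb w by auto
    have uS: "u \<notin> set S" using u w by auto
    have "E u w" using u(2) sym by blast
    then have wn: "w \<in> nbhd V E u" using w(1) by (simp add: nbhd_def)
    have wnot: "w \<notin> \<Union>(nbhd V E ` set S)"
    proof
      assume "w \<in> \<Union>(nbhd V E ` set S)"
      then obtain y where y: "y \<in> set S" "E y w" by (auto simp: nbhd_def)
      then have "E w y" using sym by blast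
      then show False using w(2) y(1) by blast
    qed
    have leg: "legal_seq V E (S @ [u])"
    proof (cases S)
      case Nil then show ?thesis using u by (simp add: legal_cons)
    next
      case (Cons x xs)
      have "lg V E (nbhd V E x) xs" using less.prems Cons by (simp add: legal_cons)
      moreover have "nbhd V E u - (nbhd V E x \<union> \<Union>(nbhd V E ` set xs)) \<noteq> {}"
        using wn wnot Cons by auto
      moreover have "x \<noteq> u" using uS Cons by auto
      ultimately show ?thesis using Cons Ssub uS u by (simp add: legal_cons lg_append)
    qed
    have "length S < card V"
    proof -
      have "set S \<subset> V" using Ssub uS u by auto
      then have "card (set S) < card V" using fin by (simp add: psubset_card_mono)
      then show ?thesis using Ssub by (simp add: distinct_card)
    qed
    then have "card V - length (S @ [u]) < card V - length S" by simp
    from less.hyps[OF this leg] show ?thesis .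
  qed
qed

lemma funpow_in: "f ` V \<subseteq> V \<Longrightarrow> v \<in> V \<Longrightarrow> (f ^^ i) v \<in> V"
  by (induction i) auto

lemma inj_funpow: "inj_on f V \<Longrightarrow> f ` V \<subseteq> V \<Longrightarrow> inj_on (f ^^ i) V"
proof (induction i)
  case 0 then show ?case by simp
next
  case (Suc i)
  have "(f ^^ i) ` V \<subseteq> V" using funpow_in[OF Suc.prems(2)] by auto
  then have "inj_on (f \<circ> (f ^^ i)) V" using Suc by (meson comp_inj_on inj_on_subset)
  then show ?case by (simp add: comp_def)
qed

lemma orbit2:
  assumes irr: "\<forall>v. \<not> E v v" and acyc: "\<nexists>cs. is_cycle V E cs" and fin: "finite V"
    and inj: "inj_on f V" and img: "f ` V \<subseteq> V" and adj: "\<forall>v\<in>V. E v (f v)"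
    and v: "v \<in> V"
  shows "f (f v) = v"
proof (rule ccontr)
  assume ne2: "f (f v) \<noteq> v"
  have bk: "(f ^^ (j - i)) v = v" if "i \<le> j" "(f ^^ i) v = (f ^^ j) v" for i j
  proof -
    have "(f ^^ i) ((f ^^ (j - i)) v) = (f ^^ (i + (j - i))) v"
      by (simp add: funpow_add)
    also have "i + (j - i) = j" using that(1) by simp
    finally have "(f ^^ i) ((f ^^ (j - i)) v) = (f ^^ j) v" .
    then have "(f ^^ i) ((f ^^ (j - i)) v) = (f ^^ i) v" using that(2) by simp
    moreover have "(f ^^ (j - i)) v \<in> V" using funpow_in[OF img v] .
    ultimately show ?thesis using inj_funpow[OF inj img, of i] v by (meson inj_onD)
  qed
  have "\<not> inj_on (\<lambda>i. (f ^^ i) v) {..card V}"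
  proof
    assume "inj_on (\<lambda>i. (f ^^ i) v) {..card V}"
    moreover have "(\<lambda>i. (f ^^ i) v) ` {..card V} \<subseteq> V" using funpow_in[OF img v] by auto
    ultimately have "card {..card V} \<le> card V" using card_inj_on_le fin by blast
    then show False by simp
  qed
  then obtain i j where ij: "i \<noteq> j" "(f ^^ i) v = (f ^^ j) v" unfolding inj_on_def by blast
  have "\<exists>d. 0 < d \<and> (f ^^ d) v = v"
  proof (cases "i < j")
    case True then show ?thesis using bk[of i j] ij by (intro exI[of _ "j - i"]) auto
  next
    case False then show ?thesis using bk[of j i] ij by (intro exI[of _ "i - j"]) auto
  qed
  define k where "k = (LEAST d. 0 < d \<and> (f ^^ d) v = v)"
  have k: "0 < k" "(f ^^ k) v = v" using LeastI_ex[OF \<open>\<exists>d. 0 < d \<and> (f ^^ d) v = v\<close>] unfolding k_def by auto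
  have kmin: "\<And>d. 0 < d \<Longrightarrow> d < k \<Longrightarrow> (f ^^ d) v \<noteq> v" unfolding k_def using not_less_Least by blast
  have "k \<noteq> 1"
  proof
    assume "k = 1" then have "f v = v" using k by simp
    then show False using irr adj v by metis
  qed
  moreover have "k \<noteq> 2"
  proof
    assume "k = 2" then have "f (f v) = v" using k by (simp add: numeral_2_eq_2)
    then show False using ne2 by simp
  qed
  ultimately have k3: "3 \<le> k" using k by linarith
  define cs where "cs = map (\<lambda>i. (f ^^ i) v) [0..<k]"
  have "distinct cs" unfolding cs_def distinct_map
  proof
    show "distinct [0..<k]" by simp
    show "inj_on (\<lambda>i. (f ^^ i) v) (set [0..<k])"
    proof (rule inj_onI)
      fix a b assume ab: "a \<in> set [0..<k]" "b \<in> set [0..<k]" "(f ^^ a) v = (f ^^ b) v"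
      show "a = b"
      proof (rule ccontr)
        assume "a \<noteq> b"
        then consider "a < b" | "b < a" by linarith
        then show False
        proof cases
          case 1
          have "(f ^^ (b - a)) v = v" using bk[of a b] ab 1 by simp
          moreover have "0 < b - a" "b - a < k" using 1 ab by auto
          ultimately show False using kmin by blast
        next
          case 2
          have "(f ^^ (a - b)) v = v" using bk[of b a] ab 2 by simp
          moreover have "0 < a - b" "a - b < k" using 2 ab by auto
          ultimately show False using kmin by blast
        qed
      qed
    qed
  qed
  moreover have "set cs \<subseteq> V" unfolding cs_def using funpow_in[OF img v] by auto
  moreover have "\<forall>i. Suc i < length cs \<longrightarrow> E (cs ! i) (cs ! Suc i)"
  proof (intro allI impI)
    fix i assume "Suc i < length cs"
    then have i: "Suc i < k" by (simp add: cs_def)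
    have "cs ! i = (f ^^ i) v" using i by (simp add: cs_def del: upt_Suc)
    moreover have "cs ! Suc i = f ((f ^^ i) v)" using i by (simp add: cs_def del: upt_Suc)
    moreover have "(f ^^ i) v \<in> V" using funpow_in[OF img v] .
    ultimately show "E (cs ! i) (cs ! Suc i)" using adj by simp
  qed
  moreover have "E (last cs) (hd cs)"
  proof -
    have "last cs = (f ^^ (k - 1)) v" unfolding cs_def using k3
      by (simp add: last_map)
    moreover have "hd cs = v" unfolding cs_def using k3 by (simp add: hd_map)
    moreover have "f ((f ^^ (k - 1)) v) = v"
    proof -
      have "f ((f ^^ (k - 1)) v) = (f ^^ Suc (k - 1)) v" by simp
      also have "Suc (k - 1) = k" using k by simp
      finally show ?thesis using k by simp
    qed
    moreover have "E ((f ^^ (k - 1)) v) (f ((f ^^ (k - 1)) v))"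
      using adj funpow_in[OF img v, of "k - 1"] by blast
    ultimately show ?thesis by simp
  qed
  moreover have "length cs \<ge> 3" unfolding cs_def using k3 by simp
  ultimately have "is_cycle V E cs" unfolding is_cycle_def by blast
  then show False using acyc by blast
qed

theorem mainTheorem8:
  fixes V :: "'a set" and E :: "'a \<Rightarrow> 'a \<Rightarrow> bool" and n :: nat
  assumes "is_tree V E" and "card V = n" and "n \<ge> 2"
  shows "gamma_gr_t V E = n \<longleftrightarrow> has_perfect_matching V E"
proof -
  have fin: "finite V" and inV: "\<forall>u v. E u v \<longrightarrow> u \<in> V \<and> v \<in> V"
    and sym: "\<forall>u v. E u v \<longrightarrow> E v u" and irr: "\<forall>v. \<not> E v v"
    and acyc: "\<nexists>cs. is_cycle V E cs" and conn: "connected_graph V E"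
    using assms(1) unfolding is_tree_def simple_graph_def acyclic_graph_def by auto
  have nb: "\<forall>v\<in>V. \<exists>u\<in>V. E v u"
  proof
    fix v assume v: "v \<in> V"
    have "card (V - {v}) = card V - 1" using v fin by simp
    then have "0 < card (V - {v})" using assms(2,3) by simp
    then have "V - {v} \<noteq> {}" by (simp add: card_gt_0_iff)
    then obtain y where y: "y \<in> V" "y \<noteq> v" by auto
    have "E\<^sup>*\<^sup>* v y" using conn v y unfolding connected_graph_def by blast
    then obtain z where "E v z" using y(2) by (metis converse_rtranclpE)
    then show "\<exists>u\<in>V. E v u" using inV by blast
  qed
  define L where "L = {length S | S. total_dominating_seq V E S}"
  have Lbound: "\<forall>x\<in>L. x \<le> card V"
  proof
    fix x assume "x \<in> L"
    then obtain S where S: "total_dominating_seq V E S" "x = length S" unfolding L_def by auto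
    then have "distinct S" "set S \<subseteq> V" by (auto simp: total_dominating_seq_def legal_seq_def)
    then show "x \<le> card V" using S(2) fin by (metis card_mono distinct_card)
  qed
  have Lfin: "finite L" using Lbound by (meson finite_atMost finite_subset subsetI atMost_iff)
  have Lne: "L \<noteq> {}"
  proof -
    have "legal_seq V E []" by (simp add: legal_seq_def)
    from greedy[OF sym fin nb this] show ?thesis unfolding L_def by auto
  qed
  have gdef: "gamma_gr_t V E = Max L" unfolding gamma_gr_t_def L_def by simp
  show ?thesis
  proof
    assume "gamma_gr_t V E = n"
    then have "n \<in> L" using gdef Max_in[OF Lfin Lne] by simp
    then obtain S where S: "total_dominating_seq V E S" "length S = n" unfolding L_def by auto
    have dS: "distinct S" and sS: "set S \<subseteq> V" using S by (auto simp: total_dominating_seq_def legal_seq_def)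
    have setS: "set S = V" using card_subset_eq[OF fin sS] dS S(2) assms(2) by (simp add: distinct_card)
    obtain x xs where Sx: "S = x # xs" using S(2) assms(3) by (cases S) auto
    have lgx: "lg V E (nbhd V E x) xs" using S(1) Sx by (simp add: total_dominating_seq_def legal_cons)
    obtain g where g: "\<forall>v\<in>set xs. g v \<in> nbhd V E v \<and> g v \<notin> nbhd V E x" "inj_on g (set xs)"
      using footprint[OF lgx] dS Sx by auto
    have xV: "x \<in> V" using setS Sx by auto
    obtain u where u: "u \<in> V" "E x u" using nb xV by auto
    have xn: "x \<notin> set xs" using dS Sx by auto
    define f where "f = g(x := u)"
    have Vx: "V = insert x (set xs)" using setS Sx by auto
    have fadj: "\<forall>v\<in>V. E v (f v) \<and> f v \<in> V" using g u xn Vx unfolding f_def nbhd_def by auto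
    have finj: "inj_on f V"
    proof -
      have "inj_on f (set xs)" using g xn unfolding f_def by (metis fun_upd_other inj_on_cong)
      moreover have "f x \<notin> f ` set xs" using g u xn unfolding f_def nbhd_def by auto
      ultimately show ?thesis using xn Vx by simp
    qed
    have fimg: "f ` V \<subseteq> V" using fadj by auto
    have ff: "\<forall>v\<in>V. f (f v) = v"
      using orbit2[OF irr acyc fin finj fimg] fadj by blast
    define M where "M = (\<lambda>v. {v, f v}) ` V"
    have "perfect_matching V E M"
      unfolding perfect_matching_def
    proof (intro conjI)
      show "\<forall>e\<in>M. \<exists>u v. e = {u, v} \<and> E u v" using fadj unfolding M_def by auto
      show "\<forall>v\<in>V. \<exists>e\<in>M. v \<in> e" unfolding M_def by auto
      show "\<forall>e1\<in>M. \<forall>e2\<in>M. e1 \<noteq> e2 \<longrightarrow> e1 \<inter> e2 = {}"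
      proof (intro ballI impI)
        fix e1 e2 assume "e1 \<in> M" "e2 \<in> M" "e1 \<noteq> e2"
        then obtain a b where ab: "a \<in> V" "b \<in> V" "e1 = {a, f a}" "e2 = {b, f b}" "e1 \<noteq> e2"
          unfolding M_def by auto
        have ffa: "f (f a) = a" and ffb: "f (f b) = b" using ff ab by auto
        show "e1 \<inter> e2 = {}"
        proof (rule ccontr)
          assume "e1 \<inter> e2 \<noteq> {}"
          then obtain c where c: "c \<in> e1" "c \<in> e2" by blast
          have c1: "c = a \<or> c = f a" using c(1) ab(3) by blast
          have c2: "c = b \<or> c = f b" using c(2) ab(4) by blast
          have "e1 = e2"
          proof (cases "c = a")
            case ca: True
            show ?thesis
            proof (cases "c = b")
              case True then show ?thesis using ca ab by simp
            next
              case False then have "a = f b" using c2 ca by simp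
              then have "f a = b" using ffb by simp
              then show ?thesis using ab \<open>a = f b\<close> by (simp add: insert_commute)
            qed
          next
            case cfa: False
            then have cfa: "c = f a" using c1 by simp
            show ?thesis
            proof (cases "c = b")
              case True then have "b = f a" using cfa by simp
              then have "f b = a" using ffa by simp
              then show ?thesis using ab \<open>b = f a\<close> by (simp add: insert_commute)
            next
              case False then have "f a = f b" using c2 cfa by simp
              then have "a = b" using ffa ffb by metis
              then show ?thesis using ab by simp
            qed
          qed
          then show False using ab(5) by simp
        qed
      qed
    qed
    then show "has_perfect_matching V E" unfolding has_perfect_matching_def by blast
  next
    assume "has_perfect_matching V E"
    then obtain M where M: "perfect_matching V E M" unfolding has_perfect_matching_def by blast
    define m where "m v = (SOME u. {v, u} \<in> M \<and> E v u)" for v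
    have m1: "{v, m v} \<in> M \<and> E v (m v)" if "v \<in> V" for v
    proof -
      have cov: "\<forall>v\<in>V. \<exists>e\<in>M. v \<in> e" and shp: "\<forall>e\<in>M. \<exists>u v. e = {u, v} \<and> E u v"
        using M by (simp_all add: perfect_matching_def)
      have "\<exists>e\<in>M. v \<in> e" using cov that by (rule bspec)
      then obtain e where e: "e \<in> M" "v \<in> e" by (rule bexE)
      have "\<exists>u w. e = {u, w} \<and> E u w" using shp e(1) by (rule bspec)
      then obtain a b where ab: "e = {a, b}" "E a b" by (elim exE conjE)
      have "\<exists>u. {v, u} \<in> M \<and> E v u"
      proof (cases "v = a")
        case True
        then have "{v, b} \<in> M \<and> E v b" using e(1) ab by simp
        then show ?thesis by (rule exI)
      next
        case False then have vb: "v = b" using e ab by simp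
        have "{b, a} = {a, b}" by (rule insert_commute)
        have "E b a" using ab(2) sym by blast
        then have "{v, a} \<in> M \<and> E v a" using e(1) ab vb insert_commute[of b a "{}"] by simp
        then show ?thesis by (rule exI)
      qed
      then show ?thesis unfolding m_def by (rule someI_ex)
    qed
    have mclos: "\<forall>x\<in>V. m x \<in> V \<and> E x (m x) \<and> m (m x) = x"
    proof
      fix x assume x: "x \<in> V"
      have a: "{x, m x} \<in> M" "E x (m x)" using m1[OF x] by auto
      then have mx: "m x \<in> V" using inV by blast
      have b: "{m x, m (m x)} \<in> M" "E (m x) (m (m x))" using m1[OF mx] by auto
      have disj: "\<forall>e1\<in>M. \<forall>e2\<in>M. e1 \<noteq> e2 \<longrightarrow> e1 \<inter> e2 = {}"
        using M by (simp add: perfect_matching_def)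
      have eq: "{x, m x} = {m x, m (m x)}"
      proof (rule ccontr)
        assume "{x, m x} \<noteq> {m x, m (m x)}"
        then have "{x, m x} \<inter> {m x, m (m x)} = {}" by (rule disj[rule_format, OF a(1) b(1)])
        then show False by simp
      qed
      have "x \<in> {m x, m (m x)}" by (subst eq[symmetric]) simp
      moreover have "x \<noteq> m x" using irr a(2) by metis
      ultimately have "m (m x) = x" by simp
      then show "m x \<in> V \<and> E x (m x) \<and> m (m x) = x" using mx a by blast
    qed
    obtain S where S: "distinct S" "set S = V" "legal_seq V E S"
      using forest_seq[OF sym irr acyc fin _ mclos] by blast
    have "total_dominating_seq V E S" using S nb
      unfolding total_dominating_seq_def total_dominating_set_def by auto
    moreover have "length S = n" using S assms(2) by (metis distinct_card)
    ultimately have "n \<in> L" unfolding L_def by blast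
    have "Max L = n" using Lbound assms(2) Lfin \<open>n \<in> L\<close> by (intro Max_eqI) auto
    then show "gamma_gr_t V E = n" using gdef by simp
  qed
qed

end
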